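(* Let $M$ be a model with borders and let $f:M^s\to U(n)$ be the unique p-morphism (with image $M_{\wedge,\to}$). For any $w\in M^s$ and any $(\wedge,\to)$-formula $\varphi$, \[ M,w\models\varphi \iff M_{\wedge,\to},f(w)\models\varphi. \]
   Context: Fix $n\ge1$ and variables $p_1,\dots,p_n$; $2^n=\{0,1\}^n$ with componentwise order. A model is $(M,\le,c)$, $(M,\le)$ a poset, $c:M\to 2^n$ order-preserving, with intuitionistic Kripke semantics. A p-morphism of models is an order- and colour-preserving map $f$ such that $f(x)\le y$ implies $f(x')=y$ for some $x'\ge x$. A $(\wedge,\to)$-formula uses only $\wedge$ and $\to$. A point $x$ is a $q$-border point if $x\not\models q$ and all $y>x$ satisfy $q$; $x$ is separated if it is a $q$-border point for some variable $q$. $M^s$: separated points with restricted order and colouring (a model in its own right; all its chains have at most $n$ elements). $M$ has borders if for every variable $p$ and every $x$ with $x\not\models p$ there is a $p$-border point $y\ge x$. $U(n)$ is the $n$-universal model: the generated submodel of the canonical model of IPC on $p_1,\dots,p_n$ (prime filters of the free Heyting algebra ordered by inclusion, $c(x)_i=1$ iff $p_i\in x$) consisting of points with finite up-set. For every model of finite depth there is a unique p-morphism into $U(n)$. $M_{\wedge,\to}$ is the image of the unique p-morphism $M^s\to U(n)$, a generated submodel of $U(n)$. *)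

theory Defs
  imports Main
begin

text \<open>Variables p_1,...,p_n are represented by the indices 0,...,n-1.\<close>

datatype form = Var nat | Bot | And form form | Or form form | Imp form form

fun vars :: "form \<Rightarrow> nat set" where
  "vars (Var i) = {i}"
| "vars Bot = {}"
| "vars (And a b) = vars a \<union> vars b"
| "vars (Or a b) = vars a \<union> vars b"
| "vars (Imp a b) = vars a \<union> vars b"

fun and_imp_form :: "form \<Rightarrow> bool" where
  "and_imp_form (Var i) = True"
| "and_imp_form Bot = False"
| "and_imp_form (And a b) = (and_imp_form a \<and> and_imp_form b)"
| "and_imp_form (Or a b) = False"
| "and_imp_form (Imp a b) = (and_imp_form a \<and> and_imp_form b)"

text \<open>A model is given by a carrier W, an order R and a colouring V (V x i = i-th bit of c(x)).\<close>

definition is_model :: "nat \<Rightarrow> 'a set \<Rightarrow> ('a \<Rightarrow> 'a \<Rightarrow> bool) \<Rightarrow> ('a \<Rightarrow> nat \<Rightarrow> bool) \<Rightarrow> bool" where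
  "is_model n W R V \<longleftrightarrow>
     (\<forall>x\<in>W. R x x) \<and>
     (\<forall>x\<in>W. \<forall>y\<in>W. \<forall>z\<in>W. R x y \<longrightarrow> R y z \<longrightarrow> R x z) \<and>
     (\<forall>x\<in>W. \<forall>y\<in>W. R x y \<longrightarrow> R y x \<longrightarrow> x = y) \<and>
     (\<forall>x\<in>W. \<forall>y\<in>W. \<forall>i<n. R x y \<longrightarrow> V x i \<longrightarrow> V y i)"

fun sat :: "'a set \<Rightarrow> ('a \<Rightarrow> 'a \<Rightarrow> bool) \<Rightarrow> ('a \<Rightarrow> nat \<Rightarrow> bool) \<Rightarrow> 'a \<Rightarrow> form \<Rightarrow> bool" where
  "sat W R V w (Var i) = V w i"
| "sat W R V w Bot = False"
| "sat W R V w (And a b) = (sat W R V w a \<and> sat W R V w b)"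
| "sat W R V w (Or a b) = (sat W R V w a \<or> sat W R V w b)"
| "sat W R V w (Imp a b) = (\<forall>v\<in>W. R w v \<longrightarrow> sat W R V v a \<longrightarrow> sat W R V v b)"

definition border_point :: "'a set \<Rightarrow> ('a \<Rightarrow> 'a \<Rightarrow> bool) \<Rightarrow> ('a \<Rightarrow> nat \<Rightarrow> bool) \<Rightarrow> nat \<Rightarrow> 'a \<Rightarrow> bool" where
  "border_point W R V i x \<longleftrightarrow>
     x \<in> W \<and> \<not> sat W R V x (Var i) \<and> (\<forall>y\<in>W. R x y \<and> y \<noteq> x \<longrightarrow> sat W R V y (Var i))"

definition separated :: "nat \<Rightarrow> 'a set \<Rightarrow> ('a \<Rightarrow> 'a \<Rightarrow> bool) \<Rightarrow> ('a \<Rightarrow> nat \<Rightarrow> bool) \<Rightarrow> 'a \<Rightarrow> bool" where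
  "separated n W R V x \<longleftrightarrow> (\<exists>i<n. border_point W R V i x)"

text \<open>Carrier of M^s (order and colouring are the restrictions of R and V).\<close>
definition sep_points :: "nat \<Rightarrow> 'a set \<Rightarrow> ('a \<Rightarrow> 'a \<Rightarrow> bool) \<Rightarrow> ('a \<Rightarrow> nat \<Rightarrow> bool) \<Rightarrow> 'a set" where
  "sep_points n W R V = {x \<in> W. separated n W R V x}"

definition has_borders :: "nat \<Rightarrow> 'a set \<Rightarrow> ('a \<Rightarrow> 'a \<Rightarrow> bool) \<Rightarrow> ('a \<Rightarrow> nat \<Rightarrow> bool) \<Rightarrow> bool" where
  "has_borders n W R V \<longleftrightarrow>
     (\<forall>i<n. \<forall>x\<in>W. \<not> sat W R V x (Var i) \<longrightarrow> (\<exists>y\<in>W. R x y \<and> border_point W R V i y))"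

definition p_morphism ::
  "nat \<Rightarrow> 'a set \<Rightarrow> ('a \<Rightarrow> 'a \<Rightarrow> bool) \<Rightarrow> ('a \<Rightarrow> nat \<Rightarrow> bool) \<Rightarrow>
   'b set \<Rightarrow> ('b \<Rightarrow> 'b \<Rightarrow> bool) \<Rightarrow> ('b \<Rightarrow> nat \<Rightarrow> bool) \<Rightarrow> ('a \<Rightarrow> 'b) \<Rightarrow> bool" where
  "p_morphism n W R V W' R' V' f \<longleftrightarrow>
     f ` W \<subseteq> W' \<and>
     (\<forall>x\<in>W. \<forall>y\<in>W. R x y \<longrightarrow> R' (f x) (f y)) \<and>
     (\<forall>x\<in>W. \<forall>i<n. V' (f x) i = V x i) \<and>
     (\<forall>x\<in>W. \<forall>y\<in>W'. R' (f x) y \<longrightarrow> (\<exists>x'\<in>W. R x x' \<and> f x' = y))"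

inductive ipc :: "form \<Rightarrow> bool" where
  ax1: "ipc (Imp a (Imp b a))"
| ax2: "ipc (Imp (Imp a (Imp b c)) (Imp (Imp a b) (Imp a c)))"
| ax3: "ipc (Imp (And a b) a)"
| ax4: "ipc (Imp (And a b) b)"
| ax5: "ipc (Imp a (Imp b (And a b)))"
| ax6: "ipc (Imp a (Or a b))"
| ax7: "ipc (Imp b (Or a b))"
| ax8: "ipc (Imp (Imp a c) (Imp (Imp b c) (Imp (Or a b) c)))"
| ax9: "ipc (Imp Bot a)"
| mp: "ipc (Imp a b) \<Longrightarrow> ipc a \<Longrightarrow> ipc b"

text \<open>Prime filters of the free Heyting algebra on p_1..p_n (the Lindenbaum algebra of
  formulas in variables < n), represented as the sets of formulas whose classes lie in the filter.\<close>
definition prime_filter :: "nat \<Rightarrow> form set \<Rightarrow> bool" where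
  "prime_filter n G \<longleftrightarrow>
     G \<subseteq> {a. vars a \<subseteq> {..<n}} \<and>
     (\<forall>a. vars a \<subseteq> {..<n} \<and> ipc a \<longrightarrow> a \<in> G) \<and>
     (\<forall>a\<in>G. \<forall>b. vars b \<subseteq> {..<n} \<and> ipc (Imp a b) \<longrightarrow> b \<in> G) \<and>
     (\<forall>a\<in>G. \<forall>b\<in>G. And a b \<in> G) \<and>
     Bot \<notin> G \<and>
     (\<forall>a b. Or a b \<in> G \<longrightarrow> a \<in> G \<or> b \<in> G)"

definition U_W :: "nat \<Rightarrow> form set set" where
  "U_W n = {G. prime_filter n G \<and> finite {H. prime_filter n H \<and> G \<subseteq> H}}"

definition U_R :: "form set \<Rightarrow> form set \<Rightarrow> bool" where
  "U_R G H \<longleftrightarrow> G \<subseteq> H"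

definition U_V :: "form set \<Rightarrow> nat \<Rightarrow> bool" where
  "U_V G i \<longleftrightarrow> Var i \<in> G"

end

theory Submission
  imports Defs
begin

lemma model_refl: "is_model n W R V \<Longrightarrow> x \<in> W \<Longrightarrow> R x x"
  unfolding is_model_def by blast
lemma model_trans: "is_model n W R V \<Longrightarrow> x \<in> W \<Longrightarrow> y \<in> W \<Longrightarrow> z \<in> W \<Longrightarrow> R x y \<Longrightarrow> R y z \<Longrightarrow> R x z"
  unfolding is_model_def by blast
lemma model_mono: "is_model n W R V \<Longrightarrow> x \<in> W \<Longrightarrow> y \<in> W \<Longrightarrow> i < n \<Longrightarrow> R x y \<Longrightarrow> V x i \<Longrightarrow> V y i"
  unfolding is_model_def by blast

lemma persist:
  assumes m: "is_model n W R V"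
  shows "vars \<phi> \<subseteq> {..<n} \<Longrightarrow> x \<in> W \<Longrightarrow> y \<in> W \<Longrightarrow> R x y \<Longrightarrow> sat W R V x \<phi> \<Longrightarrow> sat W R V y \<phi>"
proof (induction \<phi> arbitrary: x y)
  case (Var i)
  have "i < n" using Var.prems by simp
  then have "V y i" using model_mono[OF m, of x y i] Var.prems by simp
  then show ?case by simp
next
  case Bot
  then show ?case by simp
next
  case (And a b)
  have "sat W R V y a" using And.IH(1)[of x y] And.prems by simp
  moreover have "sat W R V y b" using And.IH(2)[of x y] And.prems by simp
  ultimately show ?case by simp
next
  case (Or a b)
  show ?case
  proof (cases "sat W R V x a")
    case True
    then have "sat W R V y a" using Or.IH(1)[of x y] Or.prems by simp
    then show ?thesis by simp
  next
    case False
    then have "sat W R V x b" using Or.prems by simp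
    then have "sat W R V y b" using Or.IH(2)[of x y] Or.prems by simp
    then show ?thesis by simp
  qed
next
  case (Imp a b)
  show ?case
  proof (simp only: sat.simps, intro ballI impI)
    fix v assume v: "v \<in> W" "R y v" "sat W R V v a"
    have "R x v" using model_trans[OF m, of x y v] Imp.prems v by blast
    then show "sat W R V v b" using Imp.prems v by simp
  qed
qed

lemma sep_mem: "x \<in> sep_points n W R V \<Longrightarrow> x \<in> W"
  unfolding sep_points_def by simp

lemma sep_sub: "sep_points n W R V \<subseteq> W"
  unfolding sep_points_def by auto

lemma find_sep:
  assumes m: "is_model n W R V" and hb: "has_borders n W R V"
  shows "and_imp_form \<phi> \<Longrightarrow> vars \<phi> \<subseteq> {..<n} \<Longrightarrow> v \<in> W \<Longrightarrow> \<not> sat W R V v \<phi> \<Longrightarrow>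
    \<exists>u\<in>sep_points n W R V. R v u \<and> \<not> sat W R V u \<phi>"
proof (induction \<phi> arbitrary: v)
  case (Var i)
  then have "i < n" by auto
  with hb Var.prems obtain y where "y \<in> W" "R v y" "border_point W R V i y"
    unfolding has_borders_def by blast
  then have "y \<in> sep_points n W R V" unfolding sep_points_def separated_def
    using \<open>i < n\<close> by blast
  moreover have "\<not> sat W R V y (Var i)" using \<open>border_point W R V i y\<close>
    unfolding border_point_def by blast
  ultimately show ?case using \<open>R v y\<close> by blast
next
  case (And a b)
  show ?case
  proof (cases "sat W R V v a")
    case True
    then have "\<not> sat W R V v b" using And.prems by simp
    then obtain u where "u\<in>sep_points n W R V" "R v u" "\<not> sat W R V u b"
      using And.IH(2)[of v] And.prems by auto
    then show ?thesis by auto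
  next
    case False
    then obtain u where "u\<in>sep_points n W R V" "R v u" "\<not> sat W R V u a"
      using And.IH(1)[of v] And.prems by auto
    then show ?thesis by auto
  qed
next
  case (Imp a b)
  have aa: "and_imp_form a" "and_imp_form b" "vars a \<subseteq> {..<n}" "vars b \<subseteq> {..<n}"
    using Imp.prems(1,2) by simp_all
  have "\<exists>v'\<in>W. R v v' \<and> sat W R V v' a \<and> \<not> sat W R V v' b"
    using Imp.prems(4) by simp
  then obtain v' where v': "v' \<in> W" "R v v'" "sat W R V v' a" "\<not> sat W R V v' b" by blast
  obtain u where u: "u \<in> sep_points n W R V" "R v' u" "\<not> sat W R V u b"
    using Imp.IH(2)[OF aa(2) aa(4) v'(1) v'(4)] by blast
  have uW: "u \<in> W" using sep_mem[OF u(1)] .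
  have ua: "sat W R V u a" using persist[OF m aa(3) v'(1) uW u(2) v'(3)] .
  have ruu: "R u u" using model_refl[OF m uW] .
  have rvu: "R v u" using model_trans[OF m Imp.prems(3) v'(1) uW v'(2) u(2)] .
  have "\<not> sat W R V u (Imp a b)"
  proof
    assume "sat W R V u (Imp a b)"
    then have "\<forall>x\<in>W. R u x \<longrightarrow> sat W R V x a \<longrightarrow> sat W R V x b" by simp
    then show False using uW ruu ua u(3) by blast
  qed
  then show ?case using u(1) rvu by blast
qed simp_all

lemma to_sep:
  assumes m: "is_model n W R V" and hb: "has_borders n W R V"
  shows "and_imp_form \<phi> \<Longrightarrow> vars \<phi> \<subseteq> {..<n} \<Longrightarrow> w \<in> sep_points n W R V \<Longrightarrow>
    sat W R V w \<phi> \<longleftrightarrow> sat (sep_points n W R V) R V w \<phi>"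
proof (induction \<phi> arbitrary: w)
  case (Imp a b)
  show ?case
  proof
    assume h: "sat W R V w (Imp a b)"
    show "sat (sep_points n W R V) R V w (Imp a b)"
    proof (simp only: sat.simps, intro ballI impI)
      fix v assume v: "v \<in> sep_points n W R V" "R w v" "sat (sep_points n W R V) R V v a"
      have vW: "v \<in> W" using sep_mem[OF v(1)] .
      have "sat W R V v a" using Imp.IH(1)[of v] Imp.prems v by simp
      then have "sat W R V v b" using h v vW by simp
      then show "sat (sep_points n W R V) R V v b" using Imp.IH(2)[of v] Imp.prems v by simp
    qed
  next
    assume h: "sat (sep_points n W R V) R V w (Imp a b)"
    show "sat W R V w (Imp a b)"
    proof (rule ccontr)
      assume "\<not> sat W R V w (Imp a b)"
      then obtain v where v: "v \<in> W" "R w v" "sat W R V v a" "\<not> sat W R V v b" by auto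
      from find_sep[OF m hb, of b v] Imp.prems v obtain u where
        u: "u \<in> sep_points n W R V" "R v u" "\<not> sat W R V u b" by auto
      have uW: "u \<in> W" using sep_mem[OF u(1)] .
      have wW: "w \<in> W" using sep_mem[OF Imp.prems(3)] .
      have "sat W R V u a" using persist[OF m, of a v u] Imp.prems v u uW by auto
      moreover have "R w u" using model_trans[OF m, of w v u] uW v u wW by blast
      moreover have "sat (sep_points n W R V) R V u a" using Imp.IH(1)[of u] Imp.prems u \<open>sat W R V u a\<close> by simp
      ultimately have "sat (sep_points n W R V) R V u b" using h u by simp
      then show False using Imp.IH(2)[of u] Imp.prems u by simp
    qed
  qed
next
  case (And a b)
  have "sat W R V w a \<longleftrightarrow> sat (sep_points n W R V) R V w a" using And.IH(1)[of w] And.prems by simp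
  moreover have "sat W R V w b \<longleftrightarrow> sat (sep_points n W R V) R V w b" using And.IH(2)[of w] And.prems by simp
  ultimately show ?case by (simp only: sat.simps)
qed simp_all

lemma pmor:
  assumes p: "p_morphism n S R V (U_W n) U_R U_V f"
  shows "vars \<phi> \<subseteq> {..<n} \<Longrightarrow> x \<in> S \<Longrightarrow> sat S R V x \<phi> \<longleftrightarrow> sat (f ` S) U_R U_V (f x) \<phi>"
proof (induction \<phi> arbitrary: x)
  case (Var i)
  then have "i < n" by simp
  then have "U_V (f x) i = V x i" using p Var.prems unfolding p_morphism_def by blast
  then show ?case by simp
next
  case (Imp a b)
  show ?case
  proof
    assume h: "sat S R V x (Imp a b)"
    show "sat (f ` S) U_R U_V (f x) (Imp a b)"
    proof (simp, intro ballI impI)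
      fix y assume y: "y \<in> S" "U_R (f x) (f y)" "sat (f ` S) U_R U_V (f y) a"
      have bk: "\<forall>x\<in>S. \<forall>y\<in>U_W n. U_R (f x) y \<longrightarrow> (\<exists>x'\<in>S. R x x' \<and> f x' = y)"
        and img: "f ` S \<subseteq> U_W n" using p unfolding p_morphism_def by blast+
      have "f y \<in> U_W n" using img y by blast
      then obtain x' where x': "x' \<in> S" "R x x'" "f x' = f y"
        using bk y Imp.prems by blast
      have "sat S R V x' a" using Imp.IH(1)[of x'] Imp.prems x' y by simp
      then have "sat S R V x' b" using h x' by simp
      then show "sat (f ` S) U_R U_V (f y) b" using Imp.IH(2)[of x'] Imp.prems x' by simp
    qed
  next
    assume h: "sat (f ` S) U_R U_V (f x) (Imp a b)"
    show "sat S R V x (Imp a b)"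
    proof (simp, intro ballI impI)
      fix v assume v: "v \<in> S" "R x v" "sat S R V v a"
      have forth: "\<forall>x\<in>S. \<forall>y\<in>S. R x y \<longrightarrow> U_R (f x) (f y)" using p unfolding p_morphism_def by blast
      have "U_R (f x) (f v)" using forth v Imp.prems by blast
      moreover have "sat (f ` S) U_R U_V (f v) a" using Imp.IH(1)[of v] Imp.prems v by simp
      ultimately have "sat (f ` S) U_R U_V (f v) b" using h v by simp
      then show "sat S R V v b" using Imp.IH(2)[of v] Imp.prems v by simp
    qed
  qed
next
  case Bot
  then show ?case by simp
next
  case (And a b)
  have "sat S R V x a \<longleftrightarrow> sat (f ` S) U_R U_V (f x) a" using And.IH(1)[of x] And.prems by simp
  moreover have "sat S R V x b \<longleftrightarrow> sat (f ` S) U_R U_V (f x) b" using And.IH(2)[of x] And.prems by simp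
  ultimately show ?case by (simp only: sat.simps)
next
  case (Or a b)
  have "sat S R V x a \<longleftrightarrow> sat (f ` S) U_R U_V (f x) a" using Or.IH(1)[of x] Or.prems by simp
  moreover have "sat S R V x b \<longleftrightarrow> sat (f ` S) U_R U_V (f x) b" using Or.IH(2)[of x] Or.prems by simp
  ultimately show ?case by (simp only: sat.simps)
qed

theorem proposition3p12:
  fixes n :: nat and W :: "'a set" and R :: "'a \<Rightarrow> 'a \<Rightarrow> bool" and V :: "'a \<Rightarrow> nat \<Rightarrow> bool"
    and f :: "'a \<Rightarrow> form set" and w :: 'a and \<phi> :: form
  assumes "n \<ge> 1"
    and "is_model n W R V"
    and "has_borders n W R V"
    and "p_morphism n (sep_points n W R V) R V (U_W n) U_R U_V f"
    and "w \<in> sep_points n W R V"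
    and "and_imp_form \<phi>"
    and "vars \<phi> \<subseteq> {..<n}"
  shows "sat W R V w \<phi> \<longleftrightarrow> sat (f ` sep_points n W R V) U_R U_V (f w) \<phi>"
proof -
  have e1: "sat W R V w \<phi> = sat (sep_points n W R V) R V w \<phi>"
    by (rule to_sep[OF assms(2,3) assms(6,7,5)])
  have e2: "sat (sep_points n W R V) R V w \<phi> = sat (f ` sep_points n W R V) U_R U_V (f w) \<phi>"
    by (rule pmor[OF assms(4) assms(7,5)])
  show ?thesis using e1 e2 by (rule trans)
qed

end
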